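(* Assume the setting and algorithm described in the context, and that $F$ satisfies the Polyak–Łojasiewicz condition with constant $\mu>0$. If $0<\alpha\le\frac1{2L}$, then for all $k\ge0$, almost surely, $$\mathbb E\big[F(\bar x^{k+1})-F^*\,|\,\mathcal F^k\big]\le(1-\mu\alpha)\big(F(\bar x^k)-F^*\big)+\frac{\alpha L^2}{n}\|x^k-Jx^k\|^2+\frac{\alpha^2L^3}{n}t^k .$$
   Context: Setting. Let $n,m,p\ge1$ be integers and $\mathcal V=\{1,\dots,n\}$. For each $i\in\mathcal V$ and $j\in\{1,\dots,m\}$, $f_{i,j}:\mathbb R^p\to\mathbb R$ is differentiable and $L$-smooth for some $L>0$, i.e. $\|\nabla f_{i,j}(x)-\nabla f_{i,j}(y)\|\le L\|x-y\|$ for all $x,y\in\mathbb R^p$. Let $f_i:=\frac1m\sum_{j=1}^m f_{i,j}$ and $F:=\frac1n\sum_{i=1}^n f_i$, and assume $F^*:=\inf_{x\in\mathbb R^p}F(x)>-\infty$. Let $\underline W=(\underline w_{ir})\in\mathbb R^{n\times n}$ be a nonnegative, primitive, doubly stochastic matrix ($\underline W\mathbf 1_n=\mathbf 1_n$, $\mathbf 1_n^\top\underline W=\mathbf 1_n^\top$), and let $\lambda\in[0,1)$ be its second largest singular value. Any expression with $\lambda$ in a denominator is read as $+\infty$ when $\lambda=0$. Algorithm GT-SAGA with step-size $\alpha>0$: fix a deterministic $\bar x^0\in\mathbb R^p$; for all $i\in\mathcal V$ set $x_i^0=\bar x^0$, $z_{i,j}^0=x_i^0$ for all $j$, $y_i^0=0$,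 $g_i^{-1}=0$. For $k=0,1,2,\dots$ and every $i\in\mathcal V$: draw $\tau_i^k$ uniformly from $\{1,\dots,m\}$; set $g_i^k=\nabla f_{i,\tau_i^k}(x_i^k)-\nabla f_{i,\tau_i^k}(z_{i,\tau_i^k}^k)+\frac1m\sum_{j=1}^m\nabla f_{i,j}(z_{i,j}^k)$; set $y_i^{k+1}=\sum_{r=1}^n\underline w_{ir}(y_r^k+g_r^k-g_r^{k-1})$; set $x_i^{k+1}=\sum_{r=1}^n\underline w_{ir}(x_r^k-\alpha y_r^{k+1})$; draw $s_i^k$ uniformly from $\{1,\dots,m\}$; set $z_{i,j}^{k+1}=x_i^k$ if $j=s_i^k$ and $z_{i,j}^{k+1}=z_{i,j}^k$ otherwise. The family $\{\tau_i^k,s_i^k: i\in\mathcal V,k\ge0\}$ is independent. Notation. $x^k,y^k,g^k\in\mathbb R^{np}$ stack the $x_i^k$, $y_i^k$, $g_i^k$; $\nabla\mathbf f(x^k)\in\mathbb R^{np}$ stacks $\nabla f_i(x_i^k)$, $i=1,\dots,n$; $W=\underline W\otimes I_p$, $J=(\frac1n\mathbf 1_n\mathbf 1_n^\top)\otimes I_p$; $\bar x^k=\frac1n\sum_i x_i^k$, $\bar g^k=\frac1n\sum_i g_i^k$, $\overline{\nabla\mathbf f}(x^k)=\frac1n\sum_i\nabla f_i(x_i^k)$. $\mathcal F^0$ is the trivial $\sigma$-algebra and $\mathcal F^k=\sigma(\{\tau_i^t,s_i^t:i\in\mathcal V,\ t\le k-1\})$ for $k\ge1$. $t^k:=\frac1n\sum_{i=1}^n\frac1m\sum_{j=1}^m\|\bar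 x^k-z_{i,j}^k\|^2$. $\|\nabla\mathbf f(x^0)\|^2:=\sum_{i=1}^n\|\nabla f_i(\bar x^0)\|^2$. Norms are Euclidean (spectral for matrices); vector and matrix inequalities are entrywise. Polyak–Łojasiewicz (PL) condition with constant $\mu>0$: $2\mu(F(x)-F^* )\le\|\nabla F(x)\|^2$ for all $x\in\mathbb R^p$. *)

theory Defs
  imports "HOL-Analysis.Analysis"
begin

(* Square matrices of size n are represented as functions nat => nat => real,
   only the entries with indices < n are meaningful. *)
fun matpow :: "nat \<Rightarrow> (nat \<Rightarrow> nat \<Rightarrow> real) \<Rightarrow> nat \<Rightarrow> nat \<Rightarrow> nat \<Rightarrow> real" where
  "matpow n W 0 = (\<lambda>i j. if i = j then 1 else 0)"
| "matpow n W (Suc k) = (\<lambda>i j. \<Sum>r<n. matpow n W k i r * W r j)"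

definition primitive_mat :: "nat \<Rightarrow> (nat \<Rightarrow> nat \<Rightarrow> real) \<Rightarrow> bool" where
  "primitive_mat n W \<longleftrightarrow> (\<exists>k. \<forall>i<n. \<forall>j<n. matpow n W k i j > 0)"

definition doubly_stochastic :: "nat \<Rightarrow> (nat \<Rightarrow> nat \<Rightarrow> real) \<Rightarrow> bool" where
  "doubly_stochastic n W \<longleftrightarrow>
     (\<forall>i<n. \<forall>j<n. W i j \<ge> 0) \<and>
     (\<forall>i<n. (\<Sum>r<n. W i r) = 1) \<and>
     (\<forall>j<n. (\<Sum>r<n. W r j) = 1)"

(* SAGA gradient estimator at node i; df i j x is the gradient of f_{i,j} at x,
   tau i is the sampled index tau_i^k (0-based, in {..<m}). *)
definition saga_grad ::
  "(nat \<Rightarrow> nat \<Rightarrow> 'a::euclidean_space \<Rightarrow> 'a) \<Rightarrow> nat \<Rightarrow> (nat \<Rightarrow> 'a) \<Rightarrow> (nat \<Rightarrow> nat \<Rightarrow> 'a)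
     \<Rightarrow> (nat \<Rightarrow> nat) \<Rightarrow> nat \<Rightarrow> 'a" where
  "saga_grad df m x z tau i =
     df i (tau i) (x i) - df i (tau i) (z i (tau i)) + (1 / real m) *\<^sub>R (\<Sum>j<m. df i j (z i j))"

(* State of GT-SAGA at iteration k: (x^k, y^k, g^{k-1}, z^k), as a function of the
   history h of random draws: h t i = (tau_i^t, s_i^t). *)
fun gt_saga ::
  "(nat \<Rightarrow> nat \<Rightarrow> real) \<Rightarrow> (nat \<Rightarrow> nat \<Rightarrow> 'a::euclidean_space \<Rightarrow> 'a) \<Rightarrow> nat \<Rightarrow> nat \<Rightarrow> real \<Rightarrow> 'a
     \<Rightarrow> (nat \<Rightarrow> nat \<Rightarrow> nat \<times> nat) \<Rightarrow> nat
     \<Rightarrow> (nat \<Rightarrow> 'a) \<times> (nat \<Rightarrow> 'a) \<times> (nat \<Rightarrow> 'a) \<times> (nat \<Rightarrow> nat \<Rightarrow> 'a)" where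
  "gt_saga W df n m \<alpha> x0 h 0 = ((\<lambda>i. x0), (\<lambda>i. 0), (\<lambda>i. 0), (\<lambda>i j. x0))"
| "gt_saga W df n m \<alpha> x0 h (Suc k) =
     (case gt_saga W df n m \<alpha> x0 h k of (x, y, gp, z) \<Rightarrow>
       let tau = (\<lambda>i. fst (h k i));
           s = (\<lambda>i. snd (h k i));
           g = (\<lambda>i. saga_grad df m x z tau i);
           y' = (\<lambda>i. \<Sum>r<n. W i r *\<^sub>R (y r + g r - gp r));
           x' = (\<lambda>i. \<Sum>r<n. W i r *\<^sub>R (x r - \<alpha> *\<^sub>R y' r));
           z' = (\<lambda>i j. if j = s i then x i else z i j)
       in (x', y', g, z'))"

definition gt_x where "gt_x W df n m \<alpha> x0 h k = fst (gt_saga W df n m \<alpha> x0 h k)"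
definition gt_z where "gt_z W df n m \<alpha> x0 h k = snd (snd (snd (gt_saga W df n m \<alpha> x0 h k)))"

definition avg :: "nat \<Rightarrow> (nat \<Rightarrow> 'a::real_vector) \<Rightarrow> 'a" where
  "avg n x = (1 / real n) *\<^sub>R (\<Sum>i<n. x i)"

end

theory Submission
  imports Defs
begin

lemma gt_saga_cong:
  "(\<forall>t<k. h t = h' t) \<Longrightarrow> gt_saga W df n m \<alpha> x0 h k = gt_saga W df n m \<alpha> x0 h' k"
  by (induction k) (auto simp: Let_def)

lemma avg_add: "avg n (\<lambda>i. a i + b i) = avg n a + avg n b"
  by (simp add: avg_def sum.distrib scaleR_right_distrib)
lemma avg_diff: "avg n (\<lambda>i. a i - b i) = avg n a - avg n b"
  by (simp add: avg_def sum_subtractf scaleR_right_diff_distrib)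
lemma avg_scaleR: "avg n (\<lambda>i. c *\<^sub>R a i) = c *\<^sub>R avg n a"
  by (simp add: avg_def scaleR_sum_right)

lemma avg_mix:
  assumes "\<forall>j<n. (\<Sum>r<n. W r j) = 1"
  shows "avg n (\<lambda>i. \<Sum>r<n. W i r *\<^sub>R v r) = avg n v"
proof -
  have "(\<Sum>i<n. \<Sum>r<n. W i r *\<^sub>R v r) = (\<Sum>r<n. \<Sum>i<n. W i r *\<^sub>R v r)"
    by (rule sum.swap)
  also have "\<dots> = (\<Sum>r<n. (\<Sum>i<n. W i r) *\<^sub>R v r)"
    by (simp add: scaleR_sum_left)
  also have "\<dots> = (\<Sum>r<n. v r)"
    using assms by simp
  finally show ?thesis by (simp add: avg_def)
qed

lemma track_inv:
  assumes "\<forall>j<n. (\<Sum>r<n. W r j) = 1"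
  shows "avg n (fst (snd (gt_saga W df n m \<alpha> x0 h k))) = avg n (fst (snd (snd (gt_saga W df n m \<alpha> x0 h k))))"
proof (induction k)
  case 0
  then show ?case by (simp add: avg_def)
next
  case (Suc k)
  obtain x y gp z where st: "gt_saga W df n m \<alpha> x0 h k = (x, y, gp, z)" by (cases "gt_saga W df n m \<alpha> x0 h k") auto
  with Suc have iv: "avg n y = avg n gp" by simp
  let ?g = "\<lambda>i. saga_grad df m x z (\<lambda>i. fst (h k i)) i"
  have "avg n (\<lambda>i. \<Sum>r<n. W i r *\<^sub>R (y r + ?g r - gp r)) = avg n (\<lambda>r. y r + ?g r - gp r)"
    by (rule avg_mix[OF assms])
  also have "\<dots> = avg n ?g" using iv by (simp add: avg_add avg_diff)
  finally show ?case by (simp add: st Let_def)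
qed

lemma sum_PiE_insert:
  assumes "x \<notin> S"
  shows "sum \<phi> (PiE (insert x S) T) = (\<Sum>y\<in>T x. \<Sum>g\<in>PiE S T. \<phi> (g(x:=y)))"
proof -
  have "sum \<phi> (PiE (insert x S) T) = sum (\<phi> \<circ> (\<lambda>(y, g). g(x := y))) (T x \<times> PiE S T)"
    unfolding PiE_insert_eq by (rule sum.reindex[OF inj_combinator[OF assms]])
  also have "\<dots> = (\<Sum>y\<in>T x. \<Sum>g\<in>PiE S T. \<phi> (g(x:=y)))"
    by (simp add: sum.cartesian_product split_beta)
  finally show ?thesis .
qed

lemma sum_PiE_coord_zero:
  fixes e :: "'b \<Rightarrow> 'c::comm_monoid_add"
  assumes "i \<in> I" "sum e A = 0"
  shows "(\<Sum>c\<in>PiE I (\<lambda>_. A). e (c i)) = 0"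
proof -
  have I: "I = insert i (I - {i})" using assms by auto
  have "(\<Sum>c\<in>PiE I (\<lambda>_. A). e (c i)) = (\<Sum>y\<in>A. \<Sum>g\<in>PiE (I - {i}) (\<lambda>_. A). e y)"
    by (subst I, subst sum_PiE_insert) auto
  also have "\<dots> = (\<Sum>g\<in>PiE (I - {i}) (\<lambda>_. A). \<Sum>y\<in>A. e y)"
    by (rule sum.swap)
  also have "\<dots> = 0" using assms by simp
  finally show ?thesis .
qed

lemma double_inner_sum:
  fixes u :: "'b \<Rightarrow> 'a::real_inner"
  shows "(\<Sum>y\<in>A. \<Sum>g\<in>P. 2 * (u y \<bullet> v g)) = 2 * ((\<Sum>y\<in>A. u y) \<bullet> (\<Sum>g\<in>P. v g))"
  by (simp add: inner_sum_left inner_sum_right sum_distrib_left) (rule sum.swap)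

lemma var_PiE:
  fixes e :: "nat \<Rightarrow> 'b \<Rightarrow> 'a::real_inner"
  assumes "finite I" "finite A" "\<And>i. i \<in> I \<Longrightarrow> sum (e i) A = 0"
  shows "real (card A) * (\<Sum>c\<in>PiE I (\<lambda>_. A). (norm (\<Sum>i\<in>I. e i (c i)))\<^sup>2)
       = real (card A) ^ card I * (\<Sum>i\<in>I. \<Sum>a\<in>A. (norm (e i a))\<^sup>2)"
  using assms(1,3)
proof (induction I rule: finite_induct)
  case empty
  then show ?case by simp
next
  case (insert x I)
  let ?S = "\<lambda>g. \<Sum>i\<in>I. e i (g i)"
  let ?P = "PiE I (\<lambda>_. A)"
  have fP: "finite ?P" using assms(2) insert(1) by (simp add: finite_PiE)
  have cP: "card ?P = card A ^ card I" using insert(1) by (simp add: card_PiE)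
  have "(\<Sum>c\<in>PiE (insert x I) (\<lambda>_. A). (norm (\<Sum>i\<in>insert x I. e i (c i)))\<^sup>2)
      = (\<Sum>y\<in>A. \<Sum>g\<in>?P. (norm (\<Sum>i\<in>insert x I. e i ((g(x:=y)) i)))\<^sup>2)"
    by (rule sum_PiE_insert[OF insert(2)])
  also have "\<dots> = (\<Sum>y\<in>A. \<Sum>g\<in>?P. (norm (e x y + ?S g))\<^sup>2)"
  proof (intro sum.cong refl)
    fix y g
    have "(\<Sum>i\<in>insert x I. e i ((g(x:=y)) i)) = e x y + (\<Sum>i\<in>I. e i ((g(x:=y)) i))"
      using insert(1,2) by simp
    also have "(\<Sum>i\<in>I. e i ((g(x:=y)) i)) = ?S g"
      using insert(2) by (intro sum.cong) auto
    finally show "(norm (\<Sum>i\<in>insert x I. e i ((g(x:=y)) i)))\<^sup>2 = (norm (e x y + ?S g))\<^sup>2" by simp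
  qed
  also have "\<dots> = (\<Sum>y\<in>A. \<Sum>g\<in>?P. (norm (e x y))\<^sup>2 + 2 * (e x y \<bullet> ?S g) + (norm (?S g))\<^sup>2)"
    by (intro sum.cong refl) (simp add: power2_norm_eq_inner inner_add_left inner_add_right inner_commute algebra_simps)
  also have "\<dots> = (\<Sum>y\<in>A. \<Sum>g\<in>?P. (norm (e x y))\<^sup>2) + 2 * ((\<Sum>y\<in>A. e x y) \<bullet> (\<Sum>g\<in>?P. ?S g))
                   + (\<Sum>y\<in>A. \<Sum>g\<in>?P. (norm (?S g))\<^sup>2)"
    by (simp only: sum.distrib double_inner_sum)
  also have "\<dots> = real (card A ^ card I) * (\<Sum>y\<in>A. (norm (e x y))\<^sup>2) + real (card A) * (\<Sum>g\<in>?P. (norm (?S g))\<^sup>2)"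
    using insert(4)[of x] cP by (simp add: sum_distrib_left mult.commute)
  finally have eq: "(\<Sum>c\<in>PiE (insert x I) (\<lambda>_. A). (norm (\<Sum>i\<in>insert x I. e i (c i)))\<^sup>2)
     = real (card A ^ card I) * (\<Sum>y\<in>A. (norm (e x y))\<^sup>2) + real (card A) * (\<Sum>g\<in>?P. (norm (?S g))\<^sup>2)" .
  have IH: "real (card A) * (\<Sum>g\<in>?P. (norm (?S g))\<^sup>2) = real (card A) ^ card I * (\<Sum>i\<in>I. \<Sum>a\<in>A. (norm (e i a))\<^sup>2)"
    using insert(3,4) by simp
  show ?case
    unfolding eq using insert(1,2) IH
    by (simp add: algebra_simps)
qed
lemma descent1:
  fixes f :: "'a::euclidean_space \<Rightarrow> real" and g :: "'a \<Rightarrow> 'a"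
  assumes der: "\<And>x. (f has_derivative (\<lambda>v. g x \<bullet> v)) (at x)"
    and lip: "\<And>x y. norm (g x - g y) \<le> L * norm (x - y)"
    and L: "L \<ge> 0"
  shows "f y \<le> f x + g x \<bullet> (y - x) + L / 2 * (norm (y - x))\<^sup>2"
proof -
  define d where "d = y - x"
  define \<phi> where "\<phi> t = f (x + t *\<^sub>R d) - t * (g x \<bullet> d) - L / 2 * t\<^sup>2 * (norm d)\<^sup>2" for t :: real
  have D: "DERIV \<phi> t :> (g (x + t *\<^sub>R d) \<bullet> d - g x \<bullet> d - L * t * (norm d)\<^sup>2)" for t
  proof -
    have l: "((\<lambda>t. x + t *\<^sub>R d) has_derivative (\<lambda>h. h *\<^sub>R d)) (at t)"
      by (auto intro!: derivative_eq_intros)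
    have "((\<lambda>t. f (x + t *\<^sub>R d)) has_derivative (\<lambda>h. g (x + t *\<^sub>R d) \<bullet> (h *\<^sub>R d))) (at t)"
      using has_derivative_compose[OF l der] by (simp add: o_def)
    moreover have "(\<lambda>h. g (x + t *\<^sub>R d) \<bullet> (h *\<^sub>R d)) = (*) (g (x + t *\<^sub>R d) \<bullet> d)"
      by (auto simp: fun_eq_iff)
    ultimately have "DERIV (\<lambda>t. f (x + t *\<^sub>R d)) t :> g (x + t *\<^sub>R d) \<bullet> d"
      by (simp add: has_field_derivative_def)
    then show ?thesis unfolding \<phi>_def
      by (auto intro!: derivative_eq_intros)
  qed
  have "\<phi> 1 \<le> \<phi> 0"
  proof (rule DERIV_nonpos_imp_nonincreasing[of 0 1 \<phi>])
    fix t :: real assume t: "0 \<le> t" "t \<le> 1"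
    have "(g (x + t *\<^sub>R d) - g x) \<bullet> d \<le> norm (g (x + t *\<^sub>R d) - g x) * norm d"
      by (rule norm_cauchy_schwarz)
    also have "\<dots> \<le> L * norm (t *\<^sub>R d) * norm d"
      using lip[of "x + t *\<^sub>R d" x] by (simp add: mult_right_mono)
    also have "\<dots> = L * t * (norm d)\<^sup>2" using t by (simp add: power2_eq_square)
    finally have "g (x + t *\<^sub>R d) \<bullet> d - g x \<bullet> d - L * t * (norm d)\<^sup>2 \<le> 0"
      by (simp add: inner_diff_left)
    then show "\<exists>y. DERIV \<phi> t :> y \<and> y \<le> 0" using D by blast
  qed simp
  then show ?thesis unfolding \<phi>_def d_def by simp
qed
lemma avg_ineq:
  fixes u :: "nat \<Rightarrow> 'a::real_inner"
  assumes m: "m \<ge> 1" and h: "\<And>j. j < m \<Longrightarrow> a j \<le> b j + u j \<bullet> d + c"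
  shows "(1 / real m) * (\<Sum>j<m. a j) \<le> (1 / real m) * (\<Sum>j<m. b j) + ((1 / real m) *\<^sub>R (\<Sum>j<m. u j)) \<bullet> d + c"
proof -
  have "(\<Sum>j<m. a j) \<le> (\<Sum>j<m. b j + u j \<bullet> d + c)" by (rule sum_mono) (simp add: h)
  also have "\<dots> = (\<Sum>j<m. b j) + (\<Sum>j<m. u j) \<bullet> d + real m * c"
    by (simp add: sum.distrib inner_sum_left)
  finally have "(1 / real m) * (\<Sum>j<m. a j) \<le> (1 / real m) * ((\<Sum>j<m. b j) + (\<Sum>j<m. u j) \<bullet> d + real m * c)"
    by (rule mult_left_mono) simp
  also have "\<dots> = (1 / real m) * (\<Sum>j<m. b j) + ((1 / real m) *\<^sub>R (\<Sum>j<m. u j)) \<bullet> d + c"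
    using m by (simp add: field_simps)
  finally show ?thesis .
qed
lemma var_mean:
  fixes u :: "nat \<Rightarrow> 'a::real_inner"
  assumes m: "m \<ge> 1"
  shows "(\<Sum>t<m. (norm (u t - (1 / real m) *\<^sub>R (\<Sum>j<m. u j)))\<^sup>2) \<le> (\<Sum>t<m. (norm (u t))\<^sup>2)"
proof -
  define ub where "ub = (1 / real m) *\<^sub>R (\<Sum>j<m. u j)"
  have su: "(\<Sum>j<m. u j) = real m *\<^sub>R ub" using m by (simp add: ub_def)
  have "(\<Sum>t<m. (norm (u t - ub))\<^sup>2) = (\<Sum>t<m. (norm (u t))\<^sup>2 - 2 * (u t \<bullet> ub) + (norm ub)\<^sup>2)"
    by (intro sum.cong refl) (simp add: power2_norm_eq_inner inner_diff_left inner_diff_right inner_commute)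
  also have "\<dots> = (\<Sum>t<m. (norm (u t))\<^sup>2) - 2 * ((\<Sum>t<m. u t) \<bullet> ub) + real m * (norm ub)\<^sup>2"
    by (simp add: sum.distrib sum_subtractf inner_sum_left sum_distrib_left)
  also have "\<dots> = (\<Sum>t<m. (norm (u t))\<^sup>2) - real m * (norm ub)\<^sup>2"
    unfolding su by (simp add: power2_norm_eq_inner)
  also have "\<dots> \<le> (\<Sum>t<m. (norm (u t))\<^sup>2)" by simp
  finally show ?thesis unfolding ub_def .
qed

lemma jensen_norm:
  fixes w :: "nat \<Rightarrow> 'a::real_normed_vector"
  assumes n: "n \<ge> 1"
  shows "(norm ((1 / real n) *\<^sub>R (\<Sum>i<n. w i)))\<^sup>2 \<le> (1 / real n) * (\<Sum>i<n. (norm (w i))\<^sup>2)"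
proof -
  have "norm (\<Sum>i<n. w i) \<le> (\<Sum>i<n. norm (w i))" by (rule norm_sum)
  then have "(norm (\<Sum>i<n. w i))\<^sup>2 \<le> (\<Sum>i<n. norm (w i))\<^sup>2"
    by (simp add: power_mono)
  also have "\<dots> \<le> (\<Sum>i<n. (norm (w i))\<^sup>2) * real n"
    using sum_squared_le_sum_of_squares[of "\<lambda>i. norm (w i)" "{..<n}"] by simp
  finally have *: "(norm (\<Sum>i<n. w i))\<^sup>2 \<le> (\<Sum>i<n. (norm (w i))\<^sup>2) * real n" .
  have "(norm ((1 / real n) *\<^sub>R (\<Sum>i<n. w i)))\<^sup>2 = (norm (\<Sum>i<n. w i))\<^sup>2 / (real n)\<^sup>2"
    using n by (simp add: power_divide)
  also have "\<dots> \<le> (\<Sum>i<n. (norm (w i))\<^sup>2) * real n / (real n)\<^sup>2"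
    using * by (simp add: divide_right_mono)
  also have "\<dots> = (1 / real n) * (\<Sum>i<n. (norm (w i))\<^sup>2)"
    using n by (simp add: power2_eq_square)
  finally show ?thesis .
qed

lemma norm_sq_tri:
  fixes a b c :: "'a::real_normed_vector"
  shows "(norm (a - b))\<^sup>2 \<le> 2 * (norm (a - c))\<^sup>2 + 2 * (norm (c - b))\<^sup>2"
proof -
  have "norm (a - b) \<le> norm (a - c) + norm (c - b)" by (rule norm_diff_triangle_le[of a c _ b]) simp_all
  then have "(norm (a - b))\<^sup>2 \<le> (norm (a - c) + norm (c - b))\<^sup>2" by (simp add: power_mono)
  also have "\<dots> \<le> 2 * (norm (a - c))\<^sup>2 + 2 * (norm (c - b))\<^sup>2"
    using zero_le_power2[of "norm (a - c) - norm (c - b)"] by (simp add: power2_eq_square algebra_simps)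
  finally show ?thesis .
qed

lemma avg_lip:
  fixes p q :: "nat \<Rightarrow> 'a::real_normed_vector"
  assumes m: "m \<ge> 1" and h: "\<And>j. j < m \<Longrightarrow> norm (p j - q j) \<le> K"
  shows "norm ((1 / real m) *\<^sub>R (\<Sum>j<m. p j) - (1 / real m) *\<^sub>R (\<Sum>j<m. q j)) \<le> K"
proof -
  have "norm ((1 / real m) *\<^sub>R (\<Sum>j<m. p j) - (1 / real m) *\<^sub>R (\<Sum>j<m. q j))
      = (1 / real m) * norm (\<Sum>j<m. p j - q j)"
    by (simp add: sum_subtractf flip: scaleR_diff_right)
  also have "\<dots> \<le> (1 / real m) * (\<Sum>j<m. norm (p j - q j))"
    by (intro mult_left_mono norm_sum) simp
  also have "\<dots> \<le> (1 / real m) * (\<Sum>j<m. K)"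
    by (intro mult_left_mono sum_mono h) auto
  also have "\<dots> = K" using m by simp
  finally show ?thesis .
qed

lemma lin_comb:
  fixes x1 x2 x3 x4 x5 x6 x7 x8 x9 x10 x11 x12 :: real
  shows "x1 \<le> x2 + x3 - x4 \<Longrightarrow> x5 \<le> x4 \<Longrightarrow> x3 \<le> x6 \<Longrightarrow> x7 \<le> x8 \<Longrightarrow> x8 = x9 + x10 \<Longrightarrow> x9 \<le> x6
    \<Longrightarrow> x11 = x6 + x6 \<Longrightarrow> x12 = x2 - x5 \<Longrightarrow> x1 + x7 \<le> x12 + x11 + x10"
  by linarith

theorem lemma18:
  fixes n m :: nat and L \<mu> \<alpha> :: real
    and f :: "nat \<Rightarrow> nat \<Rightarrow> 'a::euclidean_space \<Rightarrow> real"
    and df :: "nat \<Rightarrow> nat \<Rightarrow> 'a \<Rightarrow> 'a"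
    and W :: "nat \<Rightarrow> nat \<Rightarrow> real"
    and x0 :: 'a
    and F :: "'a \<Rightarrow> real" and gradF :: "'a \<Rightarrow> 'a" and Fstar :: real
  assumes n: "n \<ge> 1" and m: "m \<ge> 1" and L: "L > 0"
    and deriv: "\<And>i j x. i < n \<Longrightarrow> j < m \<Longrightarrow> (f i j has_derivative (\<lambda>v. df i j x \<bullet> v)) (at x)"
    and smooth: "\<And>i j x y. i < n \<Longrightarrow> j < m \<Longrightarrow> norm (df i j x - df i j y) \<le> L * norm (x - y)"
    and F_def: "F = (\<lambda>x. (1 / real n) * (\<Sum>i<n. (1 / real m) * (\<Sum>j<m. f i j x)))"
    and gradF_def: "gradF = (\<lambda>x. (1 / real n) *\<^sub>R (\<Sum>i<n. (1 / real m) *\<^sub>R (\<Sum>j<m. df i j x)))"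
    and bdd: "bdd_below (range F)"
    and Fstar_def: "Fstar = (INF x. F x)"
    and W_ds: "doubly_stochastic n W"
    and W_prim: "primitive_mat n W"
    and mu: "\<mu> > 0"
    and PL: "\<And>x. 2 * \<mu> * (F x - Fstar) \<le> (norm (gradF x))\<^sup>2"
    and alpha: "0 < \<alpha>" "\<alpha> \<le> 1 / (2 * L)"
    and hist: "\<And>t i. t < k \<Longrightarrow> i < n \<Longrightarrow> h t i \<in> {..<m} \<times> {..<m}"
  shows
    "(1 / (real m ^ 2) ^ n) *
       (\<Sum>c \<in> PiE {..<n} (\<lambda>_. {..<m} \<times> {..<m}).
          F (avg n (gt_x W df n m \<alpha> x0 (h(k := c)) (Suc k))) - Fstar)
     \<le> (1 - \<mu> * \<alpha>) * (F (avg n (gt_x W df n m \<alpha> x0 h k)) - Fstar)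
       + \<alpha> * L\<^sup>2 / real n *
           (\<Sum>i<n. (norm (gt_x W df n m \<alpha> x0 h k i - avg n (gt_x W df n m \<alpha> x0 h k)))\<^sup>2)
       + \<alpha>\<^sup>2 * L ^ 3 / real n *
           ((1 / real n) * (\<Sum>i<n. (1 / real m) * (\<Sum>j<m.
              (norm (avg n (gt_x W df n m \<alpha> x0 h k) - gt_z W df n m \<alpha> x0 h k i j))\<^sup>2)))"
proof -
  define A where "A = {..<m} \<times> {..<m}"
  define P where "P = PiE {..<n} (\<lambda>_. A)"
  obtain X Y GP Z where st: "gt_saga W df n m \<alpha> x0 h k = (X, Y, GP, Z)"
    by (cases "gt_saga W df n m \<alpha> x0 h k") auto
  have colsum: "\<forall>j<n. (\<Sum>r<n. W r j) = 1" using W_ds by (simp add: doubly_stochastic_def)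
  have iv: "avg n Y = avg n GP" using track_inv[OF colsum, of df m \<alpha> x0 h k] st by simp
  have xk: "gt_x W df n m \<alpha> x0 h k = X" by (simp add: gt_x_def st)
  have zk: "gt_z W df n m \<alpha> x0 h k = Z" by (simp add: gt_z_def st)
  define xb where "xb = avg n X"
  define d where "d i t = df i t (X i) - df i t (Z i t) + (1 / real m) *\<^sub>R (\<Sum>j<m. df i j (Z i j))" for i t
  define gi where "gi i = (1 / real m) *\<^sub>R (\<Sum>j<m. df i j (X i))" for i
  define e where "e i (a::nat\<times>nat) = d i (fst a) - gi i" for i a
  define gb where "gb = (1 / real n) *\<^sub>R (\<Sum>i<n. gi i)"
  define S where "S (c::nat \<Rightarrow> nat\<times>nat) = (\<Sum>i<n. e i (c i))" for c
  define g0 where "g0 = gradF xb"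
  define V where "V = (\<Sum>i<n. (norm (X i - xb))\<^sup>2)"
  define T where "T = (1 / real n) * (\<Sum>i<n. (1 / real m) * (\<Sum>j<m. (norm (xb - Z i j))\<^sup>2))"
  define R where "R = (\<Sum>i<n. (1 / real m) * (\<Sum>t<m. (norm (d i t - gi i))\<^sup>2))"
  have nr: "real n \<ge> 1" and mr: "real m \<ge> 1" using n m by auto

  have xnext: "avg n (gt_x W df n m \<alpha> x0 (h(k:=c)) (Suc k)) = xb - \<alpha> *\<^sub>R (gb + (1 / real n) *\<^sub>R S c)" for c
  proof -
    have st': "gt_saga W df n m \<alpha> x0 (h(k:=c)) k = (X, Y, GP, Z)"
      using gt_saga_cong[of k "h(k:=c)" h W df n m \<alpha> x0] st by simp
    define g where "g i = saga_grad df m X Z (\<lambda>i. fst (c i)) i" for i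
    have gg: "g i = gi i + e i (c i)" for i
      by (simp add: g_def saga_grad_def e_def d_def)
    define y' where "y' i = (\<Sum>r<n. W i r *\<^sub>R (Y r + g r - GP r))" for i
    have x': "gt_x W df n m \<alpha> x0 (h(k:=c)) (Suc k) = (\<lambda>i. \<Sum>r<n. W i r *\<^sub>R (X r - \<alpha> *\<^sub>R y' r))"
      by (simp add: gt_x_def st' Let_def y'_def g_def)
    have ay: "avg n y' = avg n g"
      unfolding y'_def avg_mix[OF colsum] using iv by (simp add: avg_add avg_diff)
    have ag: "avg n g = gb + (1 / real n) *\<^sub>R S c"
      by (simp add: avg_def gg sum.distrib gb_def S_def scaleR_right_distrib)
    show ?thesis
      unfolding x' avg_mix[OF colsum] by (simp add: avg_diff avg_scaleR ay ag xb_def)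
  qed

  have descF: "F y \<le> F x + gradF x \<bullet> (y - x) + L / 2 * (norm (y - x))\<^sup>2" for x y
  proof -
    have "(1 / real m) * (\<Sum>j<m. f i j y) \<le> (1 / real m) * (\<Sum>j<m. f i j x)
           + ((1 / real m) *\<^sub>R (\<Sum>j<m. df i j x)) \<bullet> (y - x) + L / 2 * (norm (y - x))\<^sup>2"
      if i: "i < n" for i
      by (rule avg_ineq[OF m]) (rule descent1[OF deriv smooth], use i L in auto)
    then have "(1 / real n) * (\<Sum>i<n. (1 / real m) * (\<Sum>j<m. f i j y)) \<le> (1 / real n) * (\<Sum>i<n. (1 / real m) * (\<Sum>j<m. f i j x))
           + ((1 / real n) *\<^sub>R (\<Sum>i<n. (1 / real m) *\<^sub>R (\<Sum>j<m. df i j x))) \<bullet> (y - x) + L / 2 * (norm (y - x))\<^sup>2"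
      by (intro avg_ineq[OF n])
    then show ?thesis unfolding F_def gradF_def by simp
  qed

  define K0 where "K0 = F xb - Fstar - \<alpha> * (g0 \<bullet> gb) + L * \<alpha>\<^sup>2 / 2 * (norm gb)\<^sup>2"
  define v where "v = (- \<alpha> / real n) *\<^sub>R g0 + (L * \<alpha>\<^sup>2 / real n) *\<^sub>R gb"
  define \<kappa> where "\<kappa> = L * \<alpha>\<^sup>2 / (2 * (real n)\<^sup>2)"
  have pc: "F (xb - \<alpha> *\<^sub>R (gb + (1 / real n) *\<^sub>R S c)) - Fstar \<le> K0 + v \<bullet> S c + \<kappa> * (norm (S c))\<^sup>2" for c
  proof -
    define G where "G = gb + (1 / real n) *\<^sub>R S c"
    have "F (xb - \<alpha> *\<^sub>R G) \<le> F xb + g0 \<bullet> (- \<alpha> *\<^sub>R G) + L / 2 * (norm (- \<alpha> *\<^sub>R G))\<^sup>2"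
      using descF[of "xb - \<alpha> *\<^sub>R G" xb] by (simp add: g0_def)
    also have "g0 \<bullet> (- \<alpha> *\<^sub>R G) = - \<alpha> * (g0 \<bullet> gb) - (\<alpha> / real n) * (g0 \<bullet> S c)"
      by (simp add: G_def inner_add_right algebra_simps)
    also have "(norm (- \<alpha> *\<^sub>R G))\<^sup>2 = \<alpha>\<^sup>2 * ((norm gb)\<^sup>2 + (2 / real n) * (gb \<bullet> S c) + (1 / (real n)\<^sup>2) * (norm (S c))\<^sup>2)"
    proof -
      have "(norm G)\<^sup>2 = G \<bullet> G" by (simp add: power2_norm_eq_inner)
      also have "\<dots> = gb \<bullet> gb + (2 / real n) * (gb \<bullet> S c) + (1 / (real n)\<^sup>2) * (S c \<bullet> S c)"
        by (simp add: G_def inner_add_left inner_add_right inner_commute power2_eq_square algebra_simps)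
      finally have "(norm G)\<^sup>2 = (norm gb)\<^sup>2 + (2 / real n) * (gb \<bullet> S c) + (1 / (real n)\<^sup>2) * (norm (S c))\<^sup>2"
        by (simp add: power2_norm_eq_inner)
      moreover have "(norm (- \<alpha> *\<^sub>R G))\<^sup>2 = \<alpha>\<^sup>2 * (norm G)\<^sup>2"
        by (simp add: power_mult_distrib)
      ultimately show ?thesis by simp
    qed
    finally have "F (xb - \<alpha> *\<^sub>R G) \<le> F xb + (- \<alpha> * (g0 \<bullet> gb) - (\<alpha> / real n) * (g0 \<bullet> S c))
       + L / 2 * (\<alpha>\<^sup>2 * ((norm gb)\<^sup>2 + (2 / real n) * (gb \<bullet> S c) + (1 / (real n)\<^sup>2) * (norm (S c))\<^sup>2))" .
    moreover have "v \<bullet> S c = - (\<alpha> / real n) * (g0 \<bullet> S c) + (L * \<alpha>\<^sup>2 / real n) * (gb \<bullet> S c)"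
      by (simp add: v_def inner_add_left inner_diff_left)
    ultimately show ?thesis
      unfolding G_def K0_def \<kappa>_def by (simp add: algebra_simps power2_eq_square)
  qed

  have sumA: "(\<Sum>a\<in>A. \<phi> (fst a)) = real m *\<^sub>R (\<Sum>t<m. \<phi> t)" for \<phi> :: "nat \<Rightarrow> 'b::real_vector"
  proof -
    have "(\<Sum>a\<in>A. \<phi> (fst a)) = (\<Sum>t<m. \<Sum>s<m. \<phi> t)"
      unfolding A_def by (simp add: sum.cartesian_product split_beta)
    then show ?thesis by (simp add: scaleR_sum_right sum_constant_scaleR)
  qed
  have sumAr: "(\<Sum>a\<in>A. \<phi> (fst a)) = real m * (\<Sum>t<m. \<phi> t)" for \<phi> :: "nat \<Rightarrow> real"
    using sumA[of \<phi>] by simp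
  have eA: "sum (e i) A = 0" for i
  proof -
    have "(\<Sum>t<m. d i t) = (\<Sum>t<m. df i t (X i)) - (\<Sum>t<m. df i t (Z i t)) + real m *\<^sub>R ((1 / real m) *\<^sub>R (\<Sum>j<m. df i j (Z i j)))"
      by (simp add: d_def sum.distrib sum_subtractf sum_constant_scaleR)
    also have "\<dots> = real m *\<^sub>R gi i" using m by (simp add: gi_def)
    finally have sd: "(\<Sum>t<m. d i t) = real m *\<^sub>R gi i" .
    have "sum (e i) A = real m *\<^sub>R (\<Sum>t<m. d i t - gi i)"
      unfolding e_def by (rule sumA)
    also have "\<dots> = 0" by (simp add: sum_subtractf sd sum_constant_scaleR)
    finally show ?thesis .
  qed
  have finA: "finite A" and cardA: "card A = m * m" unfolding A_def by (auto simp: card_cartesian_product)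
  have finP: "finite P" unfolding P_def using finA by (simp add: finite_PiE)
  have cardP: "real (card P) = (real m ^ 2) ^ n" unfolding P_def by (simp add: card_PiE cardA power2_eq_square)
  have sumS: "(\<Sum>c\<in>P. S c) = 0"
  proof -
    have "(\<Sum>c\<in>P. S c) = (\<Sum>i<n. \<Sum>c\<in>P. e i (c i))" unfolding S_def by (rule sum.swap)
    also have "\<dots> = 0"
    proof (rule sum.neutral, intro ballI)
      fix i assume i: "i \<in> {..<n}"
      show "(\<Sum>c\<in>P. e i (c i)) = 0"
        unfolding P_def by (rule sum_PiE_coord_zero[of i "{..<n}" "e i" A, OF i eA])
    qed
    finally show ?thesis .
  qed
  define Q where "Q = (\<Sum>i<n. \<Sum>a\<in>A. (norm (e i a))\<^sup>2)"
  have QR: "Q = real m ^ 2 * R"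
  proof -
    have "Q = (\<Sum>i<n. real m * (\<Sum>t<m. (norm (d i t - gi i))\<^sup>2))"
      unfolding Q_def e_def by (intro sum.cong refl sumAr)
    also have "\<dots> = real m ^ 2 * R" unfolding R_def using m
      by (simp add: sum_distrib_left power2_eq_square)
    finally show ?thesis .
  qed
  have varS: "(\<Sum>c\<in>P. (norm (S c))\<^sup>2) = real (card P) * R"
  proof -
    have "real (card A) * (\<Sum>c\<in>P. (norm (S c))\<^sup>2) = real (card A) ^ card {..<n} * Q"
      unfolding P_def S_def Q_def by (rule var_PiE[OF _ finA eA]) simp
    then have "real m ^ 2 * (\<Sum>c\<in>P. (norm (S c))\<^sup>2) = real m ^ 2 * ((real m ^ 2) ^ n * R)"
      by (simp add: cardA QR power2_eq_square mult_ac)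
    then show ?thesis using m cardP by simp
  qed
  have bound1: "(\<Sum>c\<in>P. F (avg n (gt_x W df n m \<alpha> x0 (h(k := c)) (Suc k))) - Fstar) \<le> real (card P) * (K0 + \<kappa> * R)"
  proof -
    have "(\<Sum>c\<in>P. F (avg n (gt_x W df n m \<alpha> x0 (h(k := c)) (Suc k))) - Fstar)
        \<le> (\<Sum>c\<in>P. K0 + v \<bullet> S c + \<kappa> * (norm (S c))\<^sup>2)"
      unfolding xnext by (rule sum_mono) (rule pc)
    also have "\<dots> = real (card P) * K0 + v \<bullet> (\<Sum>c\<in>P. S c) + \<kappa> * (\<Sum>c\<in>P. (norm (S c))\<^sup>2)"
      by (simp add: sum.distrib inner_sum_right sum_distrib_left)
    also have "\<dots> = real (card P) * (K0 + \<kappa> * R)" by (simp add: sumS varS algebra_simps)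
    finally show ?thesis .
  qed
  have E1: "(1 / (real m ^ 2) ^ n) * (\<Sum>c\<in>P. F (avg n (gt_x W df n m \<alpha> x0 (h(k := c)) (Suc k))) - Fstar) \<le> K0 + \<kappa> * R"
  proof -
    have pos: "(real m ^ 2) ^ n > 0" using m by simp
    show ?thesis using bound1 pos unfolding cardP by (simp add: field_simps)
  qed

  have La: "L * \<alpha> \<le> 1 / 2" using alpha L by (simp add: field_simps)
  have Ri: "(1 / real m) * (\<Sum>t<m. (norm (d i t - gi i))\<^sup>2)
      \<le> 2 * L\<^sup>2 * (norm (X i - xb))\<^sup>2 + 2 * L\<^sup>2 * ((1 / real m) * (\<Sum>t<m. (norm (xb - Z i t))\<^sup>2))" if i: "i < n" for i
  proof -
    define u where "u t = df i t (X i) - df i t (Z i t)" for t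
    have du: "d i t - gi i = u t - (1 / real m) *\<^sub>R (\<Sum>j<m. u j)" for t
      by (simp add: d_def gi_def u_def sum_subtractf scaleR_diff_right)
    have "(\<Sum>t<m. (norm (d i t - gi i))\<^sup>2) \<le> (\<Sum>t<m. (norm (u t))\<^sup>2)"
      unfolding du by (rule var_mean[OF m])
    also have "\<dots> \<le> (\<Sum>t<m. 2 * L\<^sup>2 * (norm (X i - xb))\<^sup>2 + 2 * L\<^sup>2 * (norm (xb - Z i t))\<^sup>2)"
    proof (rule sum_mono)
      fix t assume t: "t \<in> {..<m}"
      have "norm (u t) \<le> L * norm (X i - Z i t)" unfolding u_def using smooth i t by simp
      then have "(norm (u t))\<^sup>2 \<le> (L * norm (X i - Z i t))\<^sup>2" by (simp add: power_mono)
      also have "\<dots> = L\<^sup>2 * (norm (X i - Z i t))\<^sup>2" by (simp add: power_mult_distrib)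
      also have "\<dots> \<le> L\<^sup>2 * (2 * (norm (X i - xb))\<^sup>2 + 2 * (norm (xb - Z i t))\<^sup>2)"
        by (intro mult_left_mono norm_sq_tri) simp
      finally show "(norm (u t))\<^sup>2 \<le> 2 * L\<^sup>2 * (norm (X i - xb))\<^sup>2 + 2 * L\<^sup>2 * (norm (xb - Z i t))\<^sup>2"
        by (simp add: algebra_simps)
    qed
    also have "\<dots> = real m * (2 * L\<^sup>2 * (norm (X i - xb))\<^sup>2) + 2 * L\<^sup>2 * (\<Sum>t<m. (norm (xb - Z i t))\<^sup>2)"
      by (simp add: sum.distrib sum_distrib_left)
    finally have *: "(\<Sum>t<m. (norm (d i t - gi i))\<^sup>2) \<le> real m * (2 * L\<^sup>2 * (norm (X i - xb))\<^sup>2) + 2 * L\<^sup>2 * (\<Sum>t<m. (norm (xb - Z i t))\<^sup>2)" .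
    have "(1 / real m) * (\<Sum>t<m. (norm (d i t - gi i))\<^sup>2) \<le> (1 / real m) * (real m * (2 * L\<^sup>2 * (norm (X i - xb))\<^sup>2) + 2 * L\<^sup>2 * (\<Sum>t<m. (norm (xb - Z i t))\<^sup>2))"
      using * by (intro mult_left_mono) auto
    also have "\<dots> = 2 * L\<^sup>2 * (norm (X i - xb))\<^sup>2 + 2 * L\<^sup>2 * ((1 / real m) * (\<Sum>t<m. (norm (xb - Z i t))\<^sup>2))"
      using m by (simp add: field_simps)
    finally show ?thesis .
  qed
  have Rb: "R \<le> 2 * L\<^sup>2 * V + 2 * L\<^sup>2 * (real n * T)"
  proof -
    have "R \<le> (\<Sum>i<n. 2 * L\<^sup>2 * (norm (X i - xb))\<^sup>2 + 2 * L\<^sup>2 * ((1 / real m) * (\<Sum>t<m. (norm (xb - Z i t))\<^sup>2)))"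
      unfolding R_def by (rule sum_mono) (use Ri in auto)
    also have "\<dots> = 2 * L\<^sup>2 * V + 2 * L\<^sup>2 * (real n * T)"
      unfolding V_def T_def using n by (simp add: sum.distrib sum_distrib_left)
    finally show ?thesis .
  qed
  have Gb: "(norm (g0 - gb))\<^sup>2 \<le> L\<^sup>2 / real n * V"
  proof -
    define gf where "gf i = (1 / real m) *\<^sub>R (\<Sum>j<m. df i j xb)" for i
    have "g0 - gb = (1 / real n) *\<^sub>R (\<Sum>i<n. gf i - gi i)"
      by (simp add: g0_def gradF_def gb_def gf_def sum_subtractf scaleR_diff_right)
    then have "(norm (g0 - gb))\<^sup>2 \<le> (1 / real n) * (\<Sum>i<n. (norm (gf i - gi i))\<^sup>2)"
      using jensen_norm[OF n, of "\<lambda>i. gf i - gi i"] by simp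
    also have "\<dots> \<le> (1 / real n) * (\<Sum>i<n. L\<^sup>2 * (norm (X i - xb))\<^sup>2)"
    proof (intro mult_left_mono sum_mono)
      fix i assume i: "i \<in> {..<n}"
      have "norm (gf i - gi i) \<le> L * norm (xb - X i)"
        unfolding gf_def gi_def by (rule avg_lip[OF m]) (use smooth i in auto)
      then have "(norm (gf i - gi i))\<^sup>2 \<le> (L * norm (xb - X i))\<^sup>2" by (simp add: power_mono)
      then show "(norm (gf i - gi i))\<^sup>2 \<le> L\<^sup>2 * (norm (X i - xb))\<^sup>2"
        by (simp add: power_mult_distrib norm_minus_commute)
    qed simp
    also have "\<dots> = L\<^sup>2 / real n * V" unfolding V_def by (simp add: sum_distrib_left)
    finally show ?thesis .
  qed
  have K0b: "K0 \<le> (F xb - Fstar) + \<alpha> / 2 * (norm (g0 - gb))\<^sup>2 - \<alpha> / 2 * (norm g0)\<^sup>2"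
  proof -
    have ip: "g0 \<bullet> gb = ((norm g0)\<^sup>2 + (norm gb)\<^sup>2 - (norm (g0 - gb))\<^sup>2) / 2"
      by (rule dot_norm_neg)
    have "L * \<alpha>\<^sup>2 / 2 * (norm gb)\<^sup>2 \<le> \<alpha> / 2 * (norm gb)\<^sup>2"
    proof -
      have "L * \<alpha>\<^sup>2 = (L * \<alpha>) * \<alpha>" by (simp add: power2_eq_square)
      also have "\<dots> \<le> 1 * \<alpha>" using La alpha by (intro mult_right_mono) auto
      finally show ?thesis by (intro mult_right_mono) auto
    qed
    then show ?thesis unfolding K0_def ip by (simp add: field_simps)
  qed
  have PLb: "\<alpha> * \<mu> * (F xb - Fstar) \<le> \<alpha> / 2 * (norm g0)\<^sup>2"
    using mult_left_mono[OF PL[of xb], of "\<alpha> / 2"] alpha by (simp add: g0_def)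
  have Vn: "V \<ge> 0" unfolding V_def by (simp add: sum_nonneg)
  have h3: "\<alpha> / 2 * (norm (g0 - gb))\<^sup>2 \<le> \<alpha> * L\<^sup>2 / (2 * real n) * V"
    using mult_left_mono[OF Gb, of "\<alpha> / 2"] alpha by simp
  have h4: "\<kappa> * R \<le> \<kappa> * (2 * L\<^sup>2 * V + 2 * L\<^sup>2 * (real n * T))"
  proof -
    have "\<kappa> \<ge> 0" unfolding \<kappa>_def using L by (intro divide_nonneg_nonneg mult_nonneg_nonneg) auto
    then show ?thesis using Rb by (intro mult_left_mono)
  qed
  have h5: "\<kappa> * (2 * L\<^sup>2 * V + 2 * L\<^sup>2 * (real n * T)) = (L * \<alpha>) * (\<alpha> * L\<^sup>2 / real n) / real n * V + \<alpha>\<^sup>2 * L ^ 3 / real n * T"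
    unfolding \<kappa>_def using n by (simp add: field_simps power2_eq_square power3_eq_cube)
  have h6: "(L * \<alpha>) * (\<alpha> * L\<^sup>2 / real n) / real n * V \<le> \<alpha> * L\<^sup>2 / (2 * real n) * V"
  proof -
    have "(L * \<alpha>) / real n \<le> 1 / 2" using La nr by (simp add: field_simps)
    moreover have "0 \<le> \<alpha> * L\<^sup>2 / real n * V" using alpha Vn by simp
    ultimately have "(L * \<alpha>) / real n * (\<alpha> * L\<^sup>2 / real n * V) \<le> 1 / 2 * (\<alpha> * L\<^sup>2 / real n * V)"
      by (rule mult_right_mono)
    then show ?thesis by (simp add: field_simps)
  qed
  have h7: "\<alpha> * L\<^sup>2 / real n * V = \<alpha> * L\<^sup>2 / (2 * real n) * V + \<alpha> * L\<^sup>2 / (2 * real n) * V"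
    by (simp add: field_simps)
  have h8: "(1 - \<mu> * \<alpha>) * (F xb - Fstar) = (F xb - Fstar) - \<alpha> * \<mu> * (F xb - Fstar)"
    by (simp add: algebra_simps)
  have fin: "K0 + \<kappa> * R \<le> (1 - \<mu> * \<alpha>) * (F xb - Fstar) + \<alpha> * L\<^sup>2 / real n * V + \<alpha>\<^sup>2 * L ^ 3 / real n * T"
    by (rule lin_comb[OF K0b PLb h3 h4 h5 h6 h7 h8])
  have goal_eq: "(\<Sum>c \<in> PiE {..<n} (\<lambda>_. {..<m} \<times> {..<m}). F (avg n (gt_x W df n m \<alpha> x0 (h(k := c)) (Suc k))) - Fstar)
      = (\<Sum>c\<in>P. F (avg n (gt_x W df n m \<alpha> x0 (h(k := c)) (Suc k))) - Fstar)"
    unfolding P_def A_def ..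
  show ?thesis
    unfolding goal_eq xk zk xb_def[symmetric] V_def[symmetric] T_def[symmetric]
    using E1 fin by linarith
qed

end
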